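(* Let $(X,d)$ be an arbitrary metric space and let $p\in X$. For $x,y\in X\setminus\{p\}$ define $$\tilde\tau_p(x,y)=\log\Big(1+\frac{d(x,y)}{\sqrt{d(x,p)d(y,p)}}\Big),\qquad \tau_p(x,y)=\log\Big(1+2\frac{d(x,y)}{\sqrt{d(x,p)d(y,p)}}\Big).$$ Then $(X\setminus\{p\},\tilde\tau_p)$ is Gromov hyperbolic with $\delta=\log 3$, and $(X\setminus\{p\},\tau_p)$ is Gromov hyperbolic with $\delta=\log 3+\log 2$.
   Context: A space $(Y,\rho)$ (with $\rho$ a symmetric nonnegative distance function) is Gromov hyperbolic with constant $\delta\ge 0$ if $\rho(x,y)+\rho(z,v)\leq \max\{\rho(x,z)+\rho(y,v),\ \rho(x,v)+\rho(y,z)\}+2\delta$ for all $x,y,z,v\in Y$. *)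

theory Defs
  imports "HOL-Analysis.Analysis"
begin

definition gromov_hyperbolic_on :: "'a set \<Rightarrow> ('a \<Rightarrow> 'a \<Rightarrow> real) \<Rightarrow> real \<Rightarrow> bool" where
  "gromov_hyperbolic_on Y rho \<delta> \<longleftrightarrow> \<delta> \<ge> 0 \<and>
     (\<forall>x\<in>Y. \<forall>y\<in>Y. \<forall>z\<in>Y. \<forall>v\<in>Y.
        rho x y + rho z v \<le> max (rho x z + rho y v) (rho x v + rho y z) + 2 * \<delta>)"

definition tau_tilde :: "'a::metric_space \<Rightarrow> 'a \<Rightarrow> 'a \<Rightarrow> real" where
  "tau_tilde p x y = ln (1 + dist x y / sqrt (dist x p * dist y p))"

definition tau :: "'a::metric_space \<Rightarrow> 'a \<Rightarrow> 'a \<Rightarrow> real" where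
  "tau p x y = ln (1 + 2 * (dist x y / sqrt (dist x p * dist y p)))"

end

theory Submission
  imports Defs
begin

lemma abstract_hyp:
  fixes F G :: "'a \<Rightarrow> 'a \<Rightarrow> real" and H :: "'a \<Rightarrow> real"
  assumes K: "K \<ge> 1"
    and b: "\<And>x y. x \<in> Y \<Longrightarrow> y \<in> Y \<Longrightarrow> max (H x) (H y) \<le> G x y \<and> G x y \<le> ln K + max (H x) (H y)"
    and f: "\<And>x y. x \<in> Y \<Longrightarrow> y \<in> Y \<Longrightarrow> F x y = G x y - H x / 2 - H y / 2"
  shows "gromov_hyperbolic_on Y F (ln K)"
  unfolding gromov_hyperbolic_on_def
proof (intro conjI ballI)
  show "0 \<le> ln K" using K by simp
  fix x y z v assume xs: "x \<in> Y" "y \<in> Y" "z \<in> Y" "v \<in> Y"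
  have 1: "max (H x) (H y) \<le> G x y \<and> G x y \<le> ln K + max (H x) (H y)" using b xs by blast
  have 2: "max (H z) (H v) \<le> G z v \<and> G z v \<le> ln K + max (H z) (H v)" using b xs by blast
  have 3: "max (H x) (H z) \<le> G x z \<and> G x z \<le> ln K + max (H x) (H z)" using b xs by blast
  have 4: "max (H y) (H v) \<le> G y v \<and> G y v \<le> ln K + max (H y) (H v)" using b xs by blast
  have 5: "max (H x) (H v) \<le> G x v \<and> G x v \<le> ln K + max (H x) (H v)" using b xs by blast
  have 6: "max (H y) (H z) \<le> G y z \<and> G y z \<le> ln K + max (H y) (H z)" using b xs by blast
  show "F x y + F z v \<le> max (F x z + F y v) (F x v + F y z) + 2 * ln K"
    using 1 2 3 4 5 6 f[OF xs(1) xs(2)] f[OF xs(3) xs(4)] f[OF xs(1) xs(3)]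
      f[OF xs(2) xs(4)] f[OF xs(1) xs(4)] f[OF xs(2) xs(3)]
    by (simp add: max_def split: if_splits; linarith)
qed

lemma sqrt_bounds:
  fixes a b :: real assumes "a > 0" "b > 0"
  shows "min a b \<le> sqrt (a*b) \<and> sqrt (a*b) \<le> max a b"
proof (cases "a \<le> b")
  case True
  have "a*a \<le> a*b" "a*b \<le> b*b" using True assms by (simp_all add: mult_right_mono)
  then have "sqrt (a*a) \<le> sqrt (a*b)" "sqrt (a*b) \<le> sqrt (b*b)"
    using real_sqrt_le_mono by blast+
  then show ?thesis using True assms by (simp del: real_sqrt_mult add: real_sqrt_mult_self)
next
  case False
  have "b*b \<le> a*b" "a*b \<le> a*a" using False assms by (simp_all add: mult_right_mono)
  then have "sqrt (b*b) \<le> sqrt (a*b)" "sqrt (a*b) \<le> sqrt (a*a)"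
    using real_sqrt_le_mono by blast+
  then show ?thesis using False assms by (simp del: real_sqrt_mult add: real_sqrt_mult_self)
qed

lemma concrete:
  fixes p :: "'a::metric_space" and c K :: real
  assumes "x \<noteq> p" "y \<noteq> p" and c: "c \<ge> 1" and K: "K = 3 * c"
  shows "max (ln (dist x p)) (ln (dist y p)) \<le> ln (sqrt (dist x p * dist y p) + c * dist x y)
    \<and> ln (sqrt (dist x p * dist y p) + c * dist x y) \<le> ln K + max (ln (dist x p)) (ln (dist y p))
    \<and> ln (1 + c * (dist x y / sqrt (dist x p * dist y p))) =
       ln (sqrt (dist x p * dist y p) + c * dist x y) - ln (dist x p) / 2 - ln (dist y p) / 2"
proof -
  define a where "a = dist x p"
  define b where "b = dist y p"
  define d where "d = dist x y"
  have a: "a > 0" and b: "b > 0" using assms by (auto simp: a_def b_def)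
  have d: "d \<ge> 0" by (simp add: d_def)
  have t1: "a \<le> d + b" "b \<le> d + a" "d \<le> a + b"
    unfolding a_def b_def d_def by (metis dist_commute dist_triangle)+
  have s: "min a b \<le> sqrt (a*b) \<and> sqrt (a*b) \<le> max a b" using sqrt_bounds a b by blast
  have sp: "sqrt (a*b) > 0" using a b by simp
  have lo: "max a b \<le> sqrt (a*b) + c * d"
  proof -
    have "d \<le> c * d" using c d by (simp add: mult_le_cancel_right1)
    then show ?thesis using s t1 by (auto simp: min_def max_def split: if_splits; linarith)
  qed
  have hi: "sqrt (a*b) + c * d \<le> K * max a b"
  proof -
    have "c * d \<le> c * (2 * max a b)" using t1 c by (intro mult_left_mono) auto
    moreover have "sqrt (a*b) \<le> c * max a b" using s c a b
      by (smt (verit) max.cobounded1 mult_le_cancel_right1)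
    ultimately show ?thesis using K by (simp add: algebra_simps)
  qed
  have mpos: "max a b > 0" using a b by simp
  have lnmax: "ln (max a b) = max (ln a) (ln b)" using a b by (auto simp: max_def)
  have g1: "max (ln a) (ln b) \<le> ln (sqrt (a*b) + c * d)"
    using lo mpos lnmax by (metis ln_le_cancel_iff order_less_le_trans)
  have g2: "ln (sqrt (a*b) + c * d) \<le> ln K + max (ln a) (ln b)"
  proof -
    have "ln (sqrt (a*b) + c * d) \<le> ln (K * max a b)"
      using hi lo mpos by (metis ln_le_cancel_iff order_less_le_trans)
    also have "\<dots> = ln K + ln (max a b)" using K c mpos by (simp add: ln_mult)
    finally show ?thesis using lnmax by simp
  qed
  have "1 + c * (d / sqrt (a*b)) = (sqrt (a*b) + c * d) / sqrt (a*b)"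
    using sp a b by (simp add: add_divide_distrib)
  then have "ln (1 + c * (d / sqrt (a*b))) = ln (sqrt (a*b) + c * d) - ln (sqrt (a*b))"
  proof -
    have pos: "sqrt (a*b) + c * d > 0" using lo mpos by linarith
    show ?thesis unfolding \<open>1 + c * (d / sqrt (a*b)) = _\<close> using pos sp a b by (simp add: ln_div)
  qed
  also have "ln (sqrt (a*b)) = ln a / 2 + ln b / 2" using a b by (simp add: ln_sqrt ln_mult)
  finally have g3: "ln (1 + c * (d / sqrt (a*b))) = ln (sqrt (a*b) + c * d) - ln a / 2 - ln b / 2"
    by simp
  show ?thesis using g1 g2 g3 by (simp add: a_def b_def d_def)
qed

theorem lemma4p1:
  fixes p :: "'a::metric_space"
  shows "gromov_hyperbolic_on (UNIV - {p}) (tau_tilde p) (ln 3)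
       \<and> gromov_hyperbolic_on (UNIV - {p}) (tau p) (ln 3 + ln 2)"
proof
  show "gromov_hyperbolic_on (UNIV - {p}) (tau_tilde p) (ln 3)"
  proof (rule abstract_hyp[where G = "\<lambda>x y. ln (sqrt (dist x p * dist y p) + 1 * dist x y)"
        and H = "\<lambda>x. ln (dist x p)"])
    fix x y assume "x \<in> UNIV - {p}" "y \<in> UNIV - {p}"
    then have "x \<noteq> p" "y \<noteq> p" by auto
    note C = concrete[OF this, of 1 3]
    show "max (ln (dist x p)) (ln (dist y p)) \<le> ln (sqrt (dist x p * dist y p) + 1 * dist x y) \<and>
          ln (sqrt (dist x p * dist y p) + 1 * dist x y) \<le> ln 3 + max (ln (dist x p)) (ln (dist y p))"
      using C by simp
    show "tau_tilde p x y = ln (sqrt (dist x p * dist y p) + 1 * dist x y) - ln (dist x p) / 2 - ln (dist y p) / 2"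
      using C by (simp add: tau_tilde_def)
  qed simp
  have e: "ln 3 + ln 2 = ln (6::real)" using ln_mult[of "3::real" 2] by simp
  show "gromov_hyperbolic_on (UNIV - {p}) (tau p) (ln 3 + ln 2)"
    unfolding e
  proof (rule abstract_hyp[where G = "\<lambda>x y. ln (sqrt (dist x p * dist y p) + 2 * dist x y)"
        and H = "\<lambda>x. ln (dist x p)"])
    fix x y assume "x \<in> UNIV - {p}" "y \<in> UNIV - {p}"
    then have "x \<noteq> p" "y \<noteq> p" by auto
    note C = concrete[OF this, of 2 6]
    show "max (ln (dist x p)) (ln (dist y p)) \<le> ln (sqrt (dist x p * dist y p) + 2 * dist x y) \<and>
          ln (sqrt (dist x p * dist y p) + 2 * dist x y) \<le> ln 6 + max (ln (dist x p)) (ln (dist y p))"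
      using C by simp
    show "tau p x y = ln (sqrt (dist x p * dist y p) + 2 * dist x y) - ln (dist x p) / 2 - ln (dist y p) / 2"
      using C by (simp add: tau_def)
  qed simp
qed

end
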